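(* Let $Q$ be a symmetric Leibniz algebra and $L$ a semiprime subalgebra of $Q$ such that $Q$ is an algebra of quotients of $L$. Then $\mathscr{A}(Q)$ is a left quotient algebra of $\mathscr{A}_0$.
   Context: A symmetric Leibniz algebra is one satisfying both $[x,[y,z]]=[[x,y],z]-[[x,z],y]$ and $[x,[y,z]]=[[x,y],z]+[y,[x,z]]$. Ideals of $L$ are subspaces $I$ with $[I,L]\subseteq I$, $[L,I]\subseteq I$; $L$ is semiprime if $[I,I]\ne\{0\}$ for every nonzero ideal $I$. For $x\in Q$, $R_x(u)=[u,x]$, $L_x(u)=[x,u]$. $\mathscr{A}(Q)$ is the associative subalgebra of $\mathrm{End}(Q)$ generated by $\{R_x,L_y:x,y\in Q\}$, and $\mathscr{A}_0=\{\mu\in\mathscr{A}(Q):\mu(L)\subseteq L\}$. For $q\in Q$, with $\mathscr{A}_Q(L)$ the subalgebra of $\mathscr{A}(Q)$ generated by $R_x,L_y$ ($x,y\in L$), set ${}_L(q)=\mathbb{F}q+\{\sum\xi_i(q):\xi_i\in\mathscr{A}_Q(L)\}$ and $(L:q)=\{x\in L:[x,{}_L(q)]\subseteq L,[{}_L(q),x]\subseteq L\}$. $Q$ is an algebra of quotients of $L$ if for all $p,q\in Q$ with $p\ne0$ there is $x\in(L:q)$ with $[x,p]\ne0$ or $y\in(L:q)$ with $[p,y]\ne0$. An associative algebra $S$ is a left quotient algebra of a subalgebra $A$ if for all $p,q\in S$ with $p\neq 0$ there exists $x\in A$ with $xp\neq0$ and $xq\in A$. *)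

theory Defs
  imports Main "HOL.Vector_Spaces"
begin

text \<open>Setting: Q is the whole carrier type 'q, a vector space over the field 'f
with scalar multiplication sc; br is the bracket of Q.\<close>

definition bilinear_bracket :: "('f::field \<Rightarrow> 'q::ab_group_add \<Rightarrow> 'q) \<Rightarrow> ('q \<Rightarrow> 'q \<Rightarrow> 'q) \<Rightarrow> bool" where
  "bilinear_bracket sc br \<longleftrightarrow>
     (\<forall>y. Vector_Spaces.linear sc sc (\<lambda>x. br x y)) \<and> (\<forall>x. Vector_Spaces.linear sc sc (br x))"

definition symmetric_leibniz :: "('f::field \<Rightarrow> 'q::ab_group_add \<Rightarrow> 'q) \<Rightarrow> ('q \<Rightarrow> 'q \<Rightarrow> 'q) \<Rightarrow> bool" where
  "symmetric_leibniz sc br \<longleftrightarrow> vector_space sc \<and> bilinear_bracket sc br \<and>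
     (\<forall>x y z. br x (br y z) = br (br x y) z - br (br x z) y) \<and>
     (\<forall>x y z. br x (br y z) = br (br x y) z + br y (br x z))"

definition subalgebra :: "('f::field \<Rightarrow> 'q::ab_group_add \<Rightarrow> 'q) \<Rightarrow> ('q \<Rightarrow> 'q \<Rightarrow> 'q) \<Rightarrow> 'q set \<Rightarrow> bool" where
  "subalgebra sc br L \<longleftrightarrow> module.subspace sc L \<and> (\<forall>x\<in>L. \<forall>y\<in>L. br x y \<in> L)"

definition ideal_of :: "('f::field \<Rightarrow> 'q::ab_group_add \<Rightarrow> 'q) \<Rightarrow> ('q \<Rightarrow> 'q \<Rightarrow> 'q) \<Rightarrow> 'q set \<Rightarrow> 'q set \<Rightarrow> bool" where
  "ideal_of sc br L I \<longleftrightarrow> I \<subseteq> L \<and> module.subspace sc I \<and>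
     (\<forall>a\<in>I. \<forall>x\<in>L. br a x \<in> I \<and> br x a \<in> I)"

text \<open>[I,I] \<noteq> {0}: the span of all brackets is nonzero iff some bracket is nonzero.\<close>
definition semiprime :: "('f::field \<Rightarrow> 'q::ab_group_add \<Rightarrow> 'q) \<Rightarrow> ('q \<Rightarrow> 'q \<Rightarrow> 'q) \<Rightarrow> 'q set \<Rightarrow> bool" where
  "semiprime sc br L \<longleftrightarrow>
     (\<forall>I. ideal_of sc br L I \<and> I \<noteq> {0} \<longrightarrow> (\<exists>a\<in>I. \<exists>b\<in>I. br a b \<noteq> 0))"

text \<open>Associative (non-unital) subalgebra of End(Q) generated by R_x, L_y with x, y in S:
  the smallest set containing these operators that is closed under
  addition, scalar multiples and composition (it contains 0 as 0 * R_x).\<close>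
inductive_set gen_alg :: "('f::field \<Rightarrow> 'q::ab_group_add \<Rightarrow> 'q) \<Rightarrow> ('q \<Rightarrow> 'q \<Rightarrow> 'q) \<Rightarrow> 'q set \<Rightarrow> ('q \<Rightarrow> 'q) set"
  for sc br S where
  R: "x \<in> S \<Longrightarrow> (\<lambda>u. br u x) \<in> gen_alg sc br S"
| L: "y \<in> S \<Longrightarrow> (\<lambda>u. br y u) \<in> gen_alg sc br S"
| zero: "(\<lambda>u. 0) \<in> gen_alg sc br S"
| add: "f \<in> gen_alg sc br S \<Longrightarrow> g \<in> gen_alg sc br S \<Longrightarrow> (\<lambda>u. f u + g u) \<in> gen_alg sc br S"
| smult: "f \<in> gen_alg sc br S \<Longrightarrow> (\<lambda>u. sc c (f u)) \<in> gen_alg sc br S"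
| comp: "f \<in> gen_alg sc br S \<Longrightarrow> g \<in> gen_alg sc br S \<Longrightarrow> f \<circ> g \<in> gen_alg sc br S"

abbreviation AQ where "AQ sc br \<equiv> gen_alg sc br UNIV"

definition A0 where "A0 sc br L = {\<mu> \<in> AQ sc br. \<mu> ` L \<subseteq> L}"

definition gen_L :: "('f::field \<Rightarrow> 'q::ab_group_add \<Rightarrow> 'q) \<Rightarrow> ('q \<Rightarrow> 'q \<Rightarrow> 'q) \<Rightarrow> 'q set \<Rightarrow> 'q \<Rightarrow> 'q set" where
  "gen_L sc br L q = {sc c q + (\<Sum>\<xi>\<in>X. \<xi> q) | c X. finite X \<and> X \<subseteq> gen_alg sc br L}"

definition colon :: "('f::field \<Rightarrow> 'q::ab_group_add \<Rightarrow> 'q) \<Rightarrow> ('q \<Rightarrow> 'q \<Rightarrow> 'q) \<Rightarrow> 'q set \<Rightarrow> 'q \<Rightarrow> 'q set" where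
  "colon sc br L q = {x \<in> L. \<forall>u \<in> gen_L sc br L q. br x u \<in> L \<and> br u x \<in> L}"

definition algebra_of_quotients :: "('f::field \<Rightarrow> 'q::ab_group_add \<Rightarrow> 'q) \<Rightarrow> ('q \<Rightarrow> 'q \<Rightarrow> 'q) \<Rightarrow> 'q set \<Rightarrow> bool" where
  "algebra_of_quotients sc br L \<longleftrightarrow>
     (\<forall>p q. p \<noteq> 0 \<longrightarrow> (\<exists>x \<in> colon sc br L q. br x p \<noteq> 0 \<or> br p x \<noteq> 0))"

text \<open>S is a left quotient algebra of its subalgebra A (product = composition).\<close>
definition left_quotient_algebra :: "('q \<Rightarrow> 'q) set \<Rightarrow> ('q::zero \<Rightarrow> 'q) set \<Rightarrow> bool" where
  "left_quotient_algebra S A \<longleftrightarrow>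
     (\<forall>p\<in>S. \<forall>q\<in>S. p \<noteq> (\<lambda>u. 0) \<longrightarrow> (\<exists>x\<in>A. x \<circ> p \<noteq> (\<lambda>u. 0) \<and> x \<circ> q \<in> A))"

end

theory Submission
  imports Defs
begin

locale LieQ =
  fixes sc :: "'f::field \<Rightarrow> 'q::ab_group_add \<Rightarrow> 'q"
    and br :: "'q \<Rightarrow> 'q \<Rightarrow> 'q"
    and L :: "'q set"
  assumes vs: "vector_space sc"
    and addL: "\<And>x y z. br (x + y) z = br x z + br y z"
    and addR: "\<And>x y z. br x (y + z) = br x y + br x z"
    and scL: "\<And>c x y. br (sc c x) y = sc c (br x y)"
    and scR: "\<And>c x y. br x (sc c y) = sc c (br x y)"
    and jac: "\<And>x y z. br x (br y z) = br (br x y) z + br y (br x z)"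
    and anti: "\<And>x y. br y x = - br x y"
    and sub: "subalgebra sc br L"
    and semi: "semiprime sc br L"
    and aoq: "algebra_of_quotients sc br L"
begin

lemma md: "module sc" using vs by (simp add: module_iff_vector_space)

lemma sc0R[simp]: "sc c 0 = 0" by (rule module.scale_zero_right[OF md])
lemma sc0L[simp]: "sc 0 x = 0" by (rule module.scale_zero_left[OF md])
lemma sc1[simp]: "sc 1 x = x" by (rule module.scale_one[OF md])

lemma br0R[simp]: "br x 0 = 0" using addR[of x 0 0] by simp
lemma br0L[simp]: "br 0 x = 0" using addL[of 0 0 x] by simp
lemma negR[simp]: "br x (- y) = - br x y"
  using addR[of x y "-y"] by (simp add: add_eq_0_iff2)
lemma negL[simp]: "br (- x) y = - br x y"
  using addL[of x "-x" y] by (simp add: add_eq_0_iff2)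
lemma diffR: "br x (y - z) = br x y - br x z"
  using addR[of x y "-z"] by simp
lemma sumR: "br x (sum f X) = (\<Sum>a\<in>X. br x (f a))"
  by (induct X rule: infinite_finite_induct) (auto simp: addR)

lemma subL: "module.subspace sc L" and clL: "\<And>x y. x \<in> L \<Longrightarrow> y \<in> L \<Longrightarrow> br x y \<in> L"
  using sub by (auto simp: subalgebra_def)

lemma sp0: "module.subspace sc S \<Longrightarrow> 0 \<in> S" by (rule module.subspace_0[OF md])
lemma spadd: "module.subspace sc S \<Longrightarrow> x \<in> S \<Longrightarrow> y \<in> S \<Longrightarrow> x + y \<in> S"
  by (rule module.subspace_add[OF md])
lemma spsc: "module.subspace sc S \<Longrightarrow> x \<in> S \<Longrightarrow> sc c x \<in> S"
  by (rule module.subspace_scale[OF md])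
lemma spneg: "module.subspace sc S \<Longrightarrow> x \<in> S \<Longrightarrow> - x \<in> S"
  by (rule module.subspace_neg[OF md])
lemma spdiff: "module.subspace sc S \<Longrightarrow> x \<in> S \<Longrightarrow> y \<in> S \<Longrightarrow> x - y \<in> S"
  by (rule module.subspace_diff[OF md])
lemma spint: "module.subspace sc S \<Longrightarrow> module.subspace sc T \<Longrightarrow> module.subspace sc (S \<inter> T)"
  by (rule module.subspace_inter[OF md])

lemma idealD: assumes "ideal_of sc br L I"
  shows "I \<subseteq> L" "module.subspace sc I" "\<And>a x. a \<in> I \<Longrightarrow> x \<in> L \<Longrightarrow> br a x \<in> I"
    "\<And>a x. a \<in> I \<Longrightarrow> x \<in> L \<Longrightarrow> br x a \<in> I"
  using assms by (auto simp: ideal_of_def)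

lemma ideal_int: "ideal_of sc br L I \<Longrightarrow> ideal_of sc br L J \<Longrightarrow> ideal_of sc br L (I \<inter> J)"
  unfolding ideal_of_def using spint by auto

lemma ideal_self_ann:
  assumes I: "ideal_of sc br L I" and w: "w \<in> I" and z: "\<forall>a\<in>I. br a w = 0"
  shows "w = 0"
proof -
  define A where "A = {b \<in> I. \<forall>a\<in>I. br a b = 0}"
  have Isub: "module.subspace sc I" using idealD[OF I] by auto
  have "ideal_of sc br L A"
    unfolding ideal_of_def
  proof (intro conjI ballI)
    show "A \<subseteq> L" using idealD[OF I] A_def by auto
    show "module.subspace sc A"
      unfolding module.subspace_def[OF md] A_def
      using sp0[OF Isub] spadd[OF Isub] spsc[OF Isub] by (auto simp: addR scR)
    fix b x assume b: "b \<in> A" and x: "x \<in> L"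
    have bI: "b \<in> I" and bz: "\<forall>a\<in>I. br a b = 0" using b A_def by auto
    have 1: "br b x \<in> A"
      unfolding A_def
    proof (intro CollectI conjI ballI)
      show "br b x \<in> I" using idealD(3)[OF I bI x] .
      fix a assume a: "a \<in> I"
      have e1: "br a (br b x) = br (br a b) x + br b (br a x)" by (rule jac)
      have e2: "br b (br a x) = - br (br a x) b" by (rule anti)
      have e3: "br (br a x) b = 0" using bz idealD(3)[OF I a x] by auto
      show "br a (br b x) = 0" using bz a e1 e2 e3 by simp
    qed
    show "br b x \<in> A" by (rule 1)
    have "br x b = - br b x" by (rule anti)
    then show "br x b \<in> A"
      using spneg[OF \<open>module.subspace sc A\<close> 1] by simp
  qed
  moreover have "\<forall>a\<in>A. \<forall>b\<in>A. br a b = 0" using A_def by auto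
  ultimately have "A = {0} \<or> A = {}" using semi unfolding semiprime_def by blast
  moreover have "w \<in> A" using w z A_def by auto
  ultimately show ?thesis by auto
qed


lemma ideal_L: "ideal_of sc br L L"
  unfolding ideal_of_def using subL clL by auto

definition dense where
  "dense K \<longleftrightarrow> ideal_of sc br L K \<and> (\<forall>w\<in>L. w \<noteq> 0 \<longrightarrow> (\<exists>a\<in>K. br a w \<noteq> 0))"

definition Jc where "Jc K y = {a \<in> L. \<forall>u \<in> gen_L sc br L y. br a u \<in> K}"

lemma gen_sum: "finite X \<Longrightarrow> X \<subseteq> gen_alg sc br L \<Longrightarrow> (\<lambda>t. \<Sum>\<xi>\<in>X. \<xi> t) \<in> gen_alg sc br L"
proof (induct X rule: finite_induct)
  case empty
  then show ?case using gen_alg.zero by simp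
next
  case (insert x F)
  then show ?case using gen_alg.add[of x sc br L "\<lambda>t. \<Sum>\<xi>\<in>F. \<xi> t"] by simp
qed

lemma genL_iff: "u \<in> gen_L sc br L y \<longleftrightarrow> (\<exists>c \<xi>. \<xi> \<in> gen_alg sc br L \<and> u = sc c y + \<xi> y)"
proof
  assume "u \<in> gen_L sc br L y"
  then obtain c X where "finite X" "X \<subseteq> gen_alg sc br L" "u = sc c y + (\<Sum>\<xi>\<in>X. \<xi> y)"
    unfolding gen_L_def by auto
  then show "\<exists>c \<xi>. \<xi> \<in> gen_alg sc br L \<and> u = sc c y + \<xi> y"
    using gen_sum by fastforce
next
  assume "\<exists>c \<xi>. \<xi> \<in> gen_alg sc br L \<and> u = sc c y + \<xi> y"
  then obtain c \<xi> where "\<xi> \<in> gen_alg sc br L" "u = sc c y + \<xi> y" by auto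
  then show "u \<in> gen_L sc br L y"
    unfolding gen_L_def by (intro CollectI exI[of _ c] exI[of _ "{\<xi>}"]) auto
qed

lemma y_genL: "y \<in> gen_L sc br L y"
  unfolding genL_iff using gen_alg.zero[of sc br L] by (intro exI[of _ 1] exI[of _ "\<lambda>u. 0"]) simp

lemma genL_br: assumes v: "v \<in> L" and u: "u \<in> gen_L sc br L y"
  shows "br v u \<in> gen_L sc br L y"
proof -
  obtain c \<xi> where xi: "\<xi> \<in> gen_alg sc br L" and ue: "u = sc c y + \<xi> y"
    using u genL_iff by auto
  define \<xi>' where "\<xi>' = (\<lambda>t. (\<lambda>u. sc c (br v u)) t + ((\<lambda>u. br v u) \<circ> \<xi>) t)"
  have "\<xi>' \<in> gen_alg sc br L"
    unfolding \<xi>'_def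
    by (intro gen_alg.add gen_alg.smult gen_alg.comp gen_alg.L v xi)
  moreover have "br v u = sc 0 y + \<xi>' y"
    unfolding \<xi>'_def ue by (simp add: addR scR)
  ultimately show ?thesis unfolding genL_iff by blast
qed

lemma Jc_ideal: assumes K: "ideal_of sc br L K" shows "ideal_of sc br L (Jc K y)"
proof -
  have Ks: "module.subspace sc K" using idealD[OF K] by auto
  have sJ: "module.subspace sc (Jc K y)"
    unfolding module.subspace_def[OF md] Jc_def
    using sp0[OF Ks] spadd[OF Ks] spsc[OF Ks] sp0[OF subL] spadd[OF subL] spsc[OF subL]
    by (auto simp: addL scL)
  have 1: "br a v \<in> Jc K y" if a: "a \<in> Jc K y" and v: "v \<in> L" for a v
    unfolding Jc_def
  proof (intro CollectI conjI ballI)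
    have aL: "a \<in> L" and au: "\<And>u. u \<in> gen_L sc br L y \<Longrightarrow> br a u \<in> K" using a Jc_def by auto
    show "br a v \<in> L" using clL aL v by auto
    fix u assume u: "u \<in> gen_L sc br L y"
    have e: "br (br a v) u = br a (br v u) - br v (br a u)"
      using jac[of a v u] by (simp add: algebra_simps)
    have "br a (br v u) \<in> K" using au genL_br[OF v u] by auto
    moreover have "br v (br a u) \<in> K"
      using idealD(4)[OF K au[OF u] v] .
    ultimately show "br (br a v) u \<in> K" unfolding e using spdiff[OF Ks] by auto
  qed
  show ?thesis
    unfolding ideal_of_def
  proof (intro conjI ballI)
    show "Jc K y \<subseteq> L" unfolding Jc_def by auto
    show "module.subspace sc (Jc K y)" by (rule sJ)
    fix a x assume "a \<in> Jc K y" "x \<in> L"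
    then show b1: "br a x \<in> Jc K y" using 1 by blast
  next
    fix a x assume "a \<in> Jc K y" "x \<in> L"
    then have b1: "br a x \<in> Jc K y" using 1 by blast
    have "br x a = - br a x" by (rule anti)
    then show "br x a \<in> Jc K y"
      using b1 spneg[OF sJ b1] by simp
  qed
qed

lemma dense_prod:
  assumes M: "dense M" and M': "dense M'" and J: "ideal_of sc br L J"
    and P: "\<And>m m'. m \<in> M \<Longrightarrow> m' \<in> M' \<Longrightarrow> br m m' \<in> J"
  shows "dense J"
  unfolding dense_def
proof (intro conjI J ballI impI)
  fix w assume wL: "w \<in> L" and w0: "w \<noteq> 0"
  show "\<exists>a\<in>J. br a w \<noteq> 0"
  proof (rule ccontr)
    assume "\<not> (\<exists>a\<in>J. br a w \<noteq> 0)"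
    then have wz: "\<forall>j\<in>J. br j w = 0" by auto
    have MI: "ideal_of sc br L M" and M'I: "ideal_of sc br L M'" using M M' dense_def by auto
    have "br m w = 0" if m: "m \<in> M" for m
    proof -
      define b where "b = br m w"
      have bM: "b \<in> M" using idealD(3)[OF MI m wL] b_def by simp
      have bL: "b \<in> L" using bM idealD(1)[OF MI] by auto
      have bann: "br j b = 0" if j: "j \<in> J" for j
      proof -
        have "br j b = br (br j m) w + br m (br j w)" unfolding b_def by (rule jac)
        moreover have "br j m \<in> J" using idealD(3)[OF J j] m idealD(1)[OF MI] by auto
        ultimately show ?thesis using wz j by simp
      qed
      have "br b m' = 0" if m': "m' \<in> M'" for m'
      proof -
        define c where "c = br b m'"
        have cJ: "c \<in> J" using P[OF bM m'] c_def by simp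
        have "br j c = 0" if j: "j \<in> J" for j
        proof -
          have "br j c = br (br j b) m' + br b (br j m')" unfolding c_def by (rule jac)
          moreover have "br j m' \<in> J" using idealD(3)[OF J j] m' idealD(1)[OF M'I] by auto
          moreover have "br b (br j m') = 0" using bann[OF \<open>br j m' \<in> J\<close>] anti[of "br j m'" b] by simp
          ultimately show ?thesis using bann[OF j] by simp
        qed
        then show ?thesis using ideal_self_ann[OF J cJ] c_def by auto
      qed
      then have "\<forall>m'\<in>M'. br m' b = 0" using anti by (metis neg_equal_0_iff_equal)
      then have "b = 0" using M' bL unfolding dense_def by blast
      then show ?thesis using b_def by simp
    qed
    then show False using M wL w0 unfolding dense_def by blast
  qed
qed

lemma dense_int: "dense I \<Longrightarrow> dense J \<Longrightarrow> dense (I \<inter> J)"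
  apply (rule dense_prod[of I J])
    apply assumption+
   apply (rule ideal_int) apply (auto simp: dense_def)[2]
  apply (auto simp: dense_def ideal_of_def)
  done

lemma dense_L: "dense L"
  unfolding dense_def
proof (intro conjI ideal_L ballI impI)
  fix w assume "w \<in> L" "w \<noteq> 0"
  then show "\<exists>a\<in>L. br a w \<noteq> 0"
    using ideal_self_ann[OF ideal_L] by blast
qed

lemma dense_Jc_L: "dense (Jc L y)"
  unfolding dense_def
proof (intro conjI Jc_ideal ideal_L ballI impI)
  fix w assume "w \<in> L" "w \<noteq> 0"
  then obtain x where x: "x \<in> colon sc br L y" and "br x w \<noteq> 0 \<or> br w x \<noteq> 0"
    using aoq unfolding algebra_of_quotients_def by blast
  then have "br x w \<noteq> 0" using anti[of x w] by auto
  moreover have "x \<in> Jc L y" using x unfolding colon_def Jc_def by auto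
  ultimately show "\<exists>a\<in>Jc L y. br a w \<noteq> 0" by blast
qed

lemma dense_Jc: assumes K: "dense K" shows "dense (Jc K y)"
proof -
  have KI: "ideal_of sc br L K" using K dense_def by auto
  have Ks: "module.subspace sc K" using idealD[OF KI] by auto
  have M: "dense (K \<inter> Jc L y)" by (rule dense_int[OF K dense_Jc_L])
  show ?thesis
  proof (rule dense_prod[OF M M Jc_ideal[OF KI]])
    fix k c assume k: "k \<in> K \<inter> Jc L y" and c: "c \<in> K \<inter> Jc L y"
    have kL: "k \<in> L" and cL: "c \<in> L" using k c idealD(1)[OF KI] by auto
    show "br k c \<in> Jc K y"
      unfolding Jc_def
    proof (intro CollectI conjI ballI)
      show "br k c \<in> L" using clL kL cL by auto
      fix u assume u: "u \<in> gen_L sc br L y"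
      have e: "br (br k c) u = br k (br c u) - br c (br k u)"
        using jac[of k c u] by (simp add: algebra_simps)
      have "br c u \<in> L" using c u Jc_def by auto
      then have "br k (br c u) \<in> K" using idealD(3)[OF KI] k by auto
      moreover have "br k u \<in> L" using k u Jc_def by auto
      then have "br c (br k u) \<in> K" using idealD(3)[OF KI] c by auto
      ultimately show "br (br k c) u \<in> K" unfolding e using spdiff[OF Ks] by auto
    qed
  qed
qed

lemma dense_Q: assumes J: "dense J" and w0: "w \<noteq> 0" shows "\<exists>a\<in>J. br a w \<noteq> 0"
proof (rule ccontr)
  assume "\<not> (\<exists>a\<in>J. br a w \<noteq> 0)"
  then have wz: "\<forall>a\<in>J. br a w = 0" by auto
  have JI: "ideal_of sc br L J" using J dense_def by auto
  obtain x where x: "x \<in> colon sc br L w" and "br x w \<noteq> 0 \<or> br w x \<noteq> 0"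
    using aoq w0 unfolding algebra_of_quotients_def by blast
  then have xw: "br x w \<noteq> 0" using anti[of x w] by auto
  have xL: "x \<in> L" and xwL: "br x w \<in> L" using x y_genL unfolding colon_def by auto
  have "br a (br x w) = 0" if a: "a \<in> J" for a
  proof -
    have "br a (br x w) = br (br a x) w + br x (br a w)" by (rule jac)
    moreover have "br a x \<in> J" using idealD(3)[OF JI a xL] .
    ultimately show ?thesis using wz a by simp
  qed
  then show False using J xwL xw unfolding dense_def by blast
qed

definition P where
  "P \<mu> \<longleftrightarrow> (\<forall>K. dense K \<longrightarrow> (\<exists>J. dense J \<and> (\<forall>a\<in>J. \<forall>v\<in>L. br a (\<mu> v) \<in> K)))"

lemma P_id: "P (\<lambda>t. t)"
  unfolding P_def
proof (intro allI impI)
  fix K assume K: "dense K"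
  then have "\<forall>a\<in>K. \<forall>v\<in>L. br a v \<in> K" using idealD(3) dense_def by blast
  then show "\<exists>J. dense J \<and> (\<forall>a\<in>J. \<forall>v\<in>L. br a v \<in> K)" using K by blast
qed

lemma P_zero: "P (\<lambda>t. 0)"
  unfolding P_def
proof (intro allI impI)
  fix K assume K: "dense K"
  then have "0 \<in> K" using idealD(2) sp0 dense_def by blast
  then show "\<exists>J. dense J \<and> (\<forall>a\<in>J. \<forall>v\<in>L. br a 0 \<in> K)" using K by auto
qed

lemma P_add: assumes f: "P f" and g: "P g" shows "P (\<lambda>t. f t + g t)"
  unfolding P_def
proof (intro allI impI)
  fix K assume K: "dense K"
  have Ks: "module.subspace sc K" using K idealD(2) dense_def by blast
  obtain J1 where J1: "dense J1" "\<forall>a\<in>J1. \<forall>v\<in>L. br a (f v) \<in> K" using f K P_def by blast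
  obtain J2 where J2: "dense J2" "\<forall>a\<in>J2. \<forall>v\<in>L. br a (g v) \<in> K" using g K P_def by blast
  have "\<forall>a\<in>J1 \<inter> J2. \<forall>v\<in>L. br a (f v + g v) \<in> K"
    using J1 J2 spadd[OF Ks] by (simp add: addR)
  then show "\<exists>J. dense J \<and> (\<forall>a\<in>J. \<forall>v\<in>L. br a (f v + g v) \<in> K)"
    using dense_int[OF J1(1) J2(1)] by blast
qed

lemma P_sc: assumes f: "P f" shows "P (\<lambda>t. sc c (f t))"
  unfolding P_def
proof (intro allI impI)
  fix K assume K: "dense K"
  have Ks: "module.subspace sc K" using K idealD(2) dense_def by blast
  obtain J1 where J1: "dense J1" "\<forall>a\<in>J1. \<forall>v\<in>L. br a (f v) \<in> K" using f K P_def by blast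
  have "\<forall>a\<in>J1. \<forall>v\<in>L. br a (sc c (f v)) \<in> K"
    using J1 spsc[OF Ks] by (simp add: scR)
  then show "\<exists>J. dense J \<and> (\<forall>a\<in>J. \<forall>v\<in>L. br a (sc c (f v)) \<in> K)"
    using J1 by blast
qed

lemma P_neg: assumes f: "P f" shows "P (\<lambda>t. - f t)"
  unfolding P_def
proof (intro allI impI)
  fix K assume K: "dense K"
  have Ks: "module.subspace sc K" using K idealD(2) dense_def by blast
  obtain J1 where J1: "dense J1" "\<forall>a\<in>J1. \<forall>v\<in>L. br a (f v) \<in> K" using f K P_def by blast
  have "\<forall>a\<in>J1. \<forall>v\<in>L. br a (- f v) \<in> K"
    using J1 spneg[OF Ks] by simp
  then show "\<exists>J. dense J \<and> (\<forall>a\<in>J. \<forall>v\<in>L. br a (- f v) \<in> K)"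
    using J1 by blast
qed

lemma P_Lmul: assumes f: "P f" shows "P (\<lambda>t. br y (f t))"
  unfolding P_def
proof (intro allI impI)
  fix K assume K: "dense K"
  have KI: "ideal_of sc br L K" using K dense_def by auto
  have Ks: "module.subspace sc K" using K idealD(2) dense_def by blast
  have K1: "dense (Jc K y)" by (rule dense_Jc[OF K])
  obtain J1 where J1: "dense J1" "\<forall>a\<in>J1. \<forall>v\<in>L. br a (f v) \<in> Jc K y" using f K1 P_def by blast
  obtain J2 where J2: "dense J2" "\<forall>a\<in>J2. \<forall>v\<in>L. br a (f v) \<in> K" using f K P_def by blast
  have J3: "dense (Jc J2 y)" by (rule dense_Jc[OF J2(1)])
  have "br a (br y (f v)) \<in> K" if a: "a \<in> J1 \<inter> Jc J2 y" and v: "v \<in> L" for a v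
  proof -
    have e: "br a (br y (f v)) = br (br a y) (f v) + br y (br a (f v))" by (rule jac)
    have "br a y \<in> J2" using a y_genL unfolding Jc_def by auto
    then have 1: "br (br a y) (f v) \<in> K" using J2 v by auto
    have "br a (f v) \<in> Jc K y" using J1 a v by auto
    then have "br (br a (f v)) y \<in> K" using y_genL unfolding Jc_def by auto
    then have "- br y (br a (f v)) \<in> K" using anti[of y "br a (f v)"] by simp
    then have 2: "br y (br a (f v)) \<in> K" using spneg[OF Ks, of "- br y (br a (f v))"] by simp
    show ?thesis unfolding e using spadd[OF Ks 1 2] .
  qed
  then show "\<exists>J. dense J \<and> (\<forall>a\<in>J. \<forall>v\<in>L. br a (br y (f v)) \<in> K)"
    using dense_int[OF J1(1) J3] by blast
qed

lemma P_Rmul: assumes f: "P f" shows "P (\<lambda>t. br (f t) y)"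
proof -
  have "P (\<lambda>t. - br y (f t))" by (rule P_neg[OF P_Lmul[OF f]])
  moreover have "(\<lambda>t. - br y (f t)) = (\<lambda>t. br (f t) y)" by (rule ext, rule anti[symmetric])
  ultimately show ?thesis by simp
qed

lemma P_comp: "f \<in> AQ sc br \<Longrightarrow> P g \<Longrightarrow> P (f \<circ> g)"
proof (induct f arbitrary: g rule: gen_alg.induct)
  case (R x)
  then show ?case using P_Rmul[of g x] by (simp add: comp_def)
next
  case (L y)
  then show ?case using P_Lmul[of g y] by (simp add: comp_def)
next
  case zero
  then show ?case using P_zero by (simp add: comp_def)
next
  case (add f h)
  then show ?case using P_add[of "f \<circ> g" "h \<circ> g"] by (simp add: comp_def)
next
  case (smult f c)
  then show ?case using P_sc[of "f \<circ> g" c] by (simp add: comp_def)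
next
  case (comp f h)
  then show ?case by (simp add: comp_assoc)
qed

lemma P_all: "f \<in> AQ sc br \<Longrightarrow> P f"
  using P_comp[of f "\<lambda>t. t"] P_id by (simp add: comp_def)

lemma main: "left_quotient_algebra (AQ sc br) (A0 sc br L)"
  unfolding left_quotient_algebra_def
proof (intro ballI impI)
  fix p q assume p: "p \<in> AQ sc br" and q: "q \<in> AQ sc br" and p0: "p \<noteq> (\<lambda>u. 0)"
  obtain u where pu: "p u \<noteq> 0" using p0 by auto
  obtain J where J: "dense J" "\<forall>a\<in>J. \<forall>v\<in>L. br a (q v) \<in> L"
    using P_all[OF q] dense_L P_def by blast
  obtain a where a: "a \<in> J" "br a (p u) \<noteq> 0" using dense_Q[OF J(1) pu] by blast
  have aL: "a \<in> L" using a J(1) dense_def idealD(1) by blast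
  define x where "x = (\<lambda>t. br a t)"
  have xA: "x \<in> AQ sc br" unfolding x_def by (rule gen_alg.L) simp
  have "x \<in> A0 sc br L" unfolding A0_def using xA aL clL x_def by auto
  moreover have "x \<circ> p \<noteq> (\<lambda>u. 0)" using a x_def by (metis comp_apply)
  moreover have "x \<circ> q \<in> A0 sc br L"
    unfolding A0_def using gen_alg.comp[OF xA q] J a x_def by auto
  ultimately show "\<exists>x\<in>A0 sc br L. x \<circ> p \<noteq> (\<lambda>u. 0) \<and> x \<circ> q \<in> A0 sc br L" by blast
qed

end

theorem theorem5p11:
  fixes sc :: "'f::field \<Rightarrow> 'q::ab_group_add \<Rightarrow> 'q"
    and br :: "'q \<Rightarrow> 'q \<Rightarrow> 'q"
    and L :: "'q set"
  assumes "symmetric_leibniz sc br"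
    and "subalgebra sc br L"
    and "semiprime sc br L"
    and "algebra_of_quotients sc br L"
  shows "left_quotient_algebra (AQ sc br) (A0 sc br L)"
proof -
  have vs: "vector_space sc"
    and l1: "\<And>y. Vector_Spaces.linear sc sc (\<lambda>x. br x y)"
    and l2: "\<And>x. Vector_Spaces.linear sc sc (br x)"
    and i1: "\<And>x y z. br x (br y z) = br (br x y) z - br (br x z) y"
    and i2: "\<And>x y z. br x (br y z) = br (br x y) z + br y (br x z)"
    using assms(1) unfolding symmetric_leibniz_def bilinear_bracket_def by blast+
  have addL: "\<And>x y z. br (x + y) z = br x z + br y z"
    and scL: "\<And>c x y. br (sc c x) y = sc c (br x y)"
    using l1 unfolding linear_iff by blast+
  have addR: "\<And>x y z. br x (y + z) = br x y + br x z"
    and scR: "\<And>c x y. br x (sc c y) = sc c (br x y)"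
    using l2 unfolding linear_iff by blast+
  have sq: "br x x = 0" for x
  proof (rule ccontr)
    assume ne: "br x x \<noteq> 0"
    have a: "br z (br x x) = 0" for z using i1[of z x x] by simp
    have b: "br (br x x) z = 0" for z using i2[of x x z] by simp
    obtain y where "br y (br x x) \<noteq> 0 \<or> br (br x x) y \<noteq> 0"
      using assms(4) ne unfolding algebra_of_quotients_def by meson
    then show False using a b by simp
  qed
  have anti: "br y x = - br x y" for x y
  proof -
    have "br (x + y) (x + y) = 0" by (rule sq)
    then have "br x x + br y x + (br x y + br y y) = 0" by (simp only: addL addR)
    then have "br y x + br x y = 0" using sq[of x] sq[of y] by (simp add: add.commute)
    then show ?thesis by (rule add_eq_0_iff2[THEN iffD1])
  qed
  interpret LieQ sc br L
    using vs addL addR scL scR i2 anti assms(2) assms(3) assms(4) by (rule LieQ.intro)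
  show ?thesis by (rule main)
qed

end
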